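(* Let $X$ be a finite set of clocks and $P$ a finite set of parameters, and let $Z$ be a parametric zone over $(X,P)$, written as a finite conjunction of constraints $Z=\bigwedge_i \phi_i$. Then: (1) The upper temporal bound of $Z$ satisfies $$\bigcup_{\psi\in U_{Temp}(Z)} UB(Z,\psi) \;=\; \Big\{\, v+\delta_{sup} \;\Big|\; v\in Z,\ \delta_{sup}=\sup\{\delta\in\mathbb{R}_{\ge 0}\mid v+\delta\in Z\}\in\mathbb{R}_{\ge 0}\,\Big\}.$$ (2) The lower temporal bound of $Z$ satisfies $$\bigcup_{\psi\in L_{Temp}(Z)} LB(Z,\psi) \;=\; \Big\{\, v-\delta_{sup} \;\Big|\; v\in Z,\ \delta_{sup}=\sup\{\delta\in\mathbb{R}_{\ge 0}\mid v-\delta\in Z\}\in\mathbb{R}_{\ge 0}\,\Big\}.$$ (In particular, the supremum is required to be finite; if $Z$ has no upper temporal constraint, both sides of (1) are empty.)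
   Context: A valuation is a pair $v=(v_X,v_P)$ with $v_X:X\to\mathbb{R}_{\ge0}$ and $v_P:P\to\mathbb{Q}_{\ge0}$. A linear term over $P$ is an expression $k_0+\sum_j k_j p_j$ with $k_j\in\mathbb{Q}$, $p_j\in P$; $v(plt)$ denotes its value under $v_P$. A parametric zone is a finite conjunction of constraints of the forms $x\sim plt$, $x-y\sim plt$, or $plt'\sim plt$, with $x,y\in X$, $plt,plt'$ linear terms over $P$ and ${\sim}\in\{<,\le,=,\ge,>\}$; it is identified with the set of valuations satisfying it. For $\delta\ge 0$, $v+\delta$ (resp. $v-\delta$) is the valuation that adds (resp. subtracts) $\delta$ to every clock value and leaves parameters unchanged; $v-\delta\in Z$ requires in particular all clock values to be nonnegative. Upper temporal constraints of $Z$, denoted $U_{Temp}(Z)$, are its conjuncts $x\sim plt$ with ${\sim}\in\{<,\le,=\}$; lower temporal constraints $L_{Temp}(Z)$ are its conjuncts $x\sim plt$ with ${\sim}\in\{>,\ge,=\}$, together with the implicit constraints $x\ge 0$ for every $x\in X$. All other conjuncts (of the form $x-y\sim plt$ or $plt'\sim plt$) are called diagonal constraints. The upper temporal closure $\overline{Z}^{U}$ of $Z$ is obtained by keeping diagonal constraints unchanged, making every upper temporal constraint non-strict ($<$ becomes $\le$) and every lower temporal constraint strict ($\ge$ becomes $>$, including the implicit $x\ge0$ which becomes $x>0$). The lower temporal closure $\overline{Z}^{L}$ is defined symmetrically: lower temporal constraints made non-strict, upper temporal constraints made strict, diagonal constraints unchanged. For an upper temporal constraint $\psi=(x\sim plt)$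 of $Z$, the temporal upper bound $UB(Z,\psi)$ is the zone obtained by replacing $x\le plt$ by $x=plt$ in $Z$ if $\psi$ is non-strict, or in $\overline{Z}^{U}$ if $\psi$ is strict. For a lower temporal constraint $\psi=(x\sim plt)$, the temporal lower bound $LB(Z,\psi)$ is obtained by replacing $x\ge plt$ by $x=plt$ in $Z$ if $\psi$ is non-strict, or in $\overline{Z}^{L}$ if $\psi$ is strict. *)

theory Defs
  imports Complex_Main
begin

datatype cmp = Lt | Le | Eq | Ge | Gt

fun cmp_sem :: "cmp \<Rightarrow> 'a::linorder \<Rightarrow> 'a \<Rightarrow> bool" where
  "cmp_sem Lt a b = (a < b)"
| "cmp_sem Le a b = (a \<le> b)"
| "cmp_sem Eq a b = (a = b)"
| "cmp_sem Ge a b = (a \<ge> b)"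
| "cmp_sem Gt a b = (a > b)"

text \<open>Linear terms k0 + sum_j kj pj over the (finite) parameter type, rational coefficients.\<close>
type_synonym 'p lterm = "rat \<times> ('p \<Rightarrow> rat)"

definition lt_val :: "('p::finite \<Rightarrow> rat) \<Rightarrow> 'p lterm \<Rightarrow> rat" where
  "lt_val vp t = fst t + (\<Sum>p\<in>UNIV. snd t p * vp p)"

definition lt_zero :: "'p lterm" where
  "lt_zero = (0, \<lambda>_. 0)"

datatype ('x, 'p) constr =
    ClkC 'x cmp "'p lterm"
  | DiffC 'x 'x cmp "'p lterm"
  | ParC "'p lterm" cmp "'p lterm"

type_synonym ('x, 'p) valuation = "('x \<Rightarrow> real) \<times> ('p \<Rightarrow> rat)"

definition is_valuation :: "('x, 'p) valuation \<Rightarrow> bool" where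
  "is_valuation v \<longleftrightarrow> (\<forall>x. fst v x \<ge> 0) \<and> (\<forall>p. snd v p \<ge> 0)"

fun sat :: "('x, 'p::finite) valuation \<Rightarrow> ('x, 'p) constr \<Rightarrow> bool" where
  "sat v (ClkC x k t) = cmp_sem k (fst v x) (of_rat (lt_val (snd v) t))"
| "sat v (DiffC x y k t) = cmp_sem k (fst v x - fst v y) (of_rat (lt_val (snd v) t))"
| "sat v (ParC t' k t) = cmp_sem k (lt_val (snd v) t') (lt_val (snd v) t)"

definition zone_sem :: "('x, 'p::finite) constr set \<Rightarrow> ('x, 'p) valuation set" where
  "zone_sem Z = {v. is_valuation v \<and> (\<forall>c\<in>Z. sat v c)}"

definition delay :: "('x, 'p) valuation \<Rightarrow> real \<Rightarrow> ('x, 'p) valuation" where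
  "delay v d = ((\<lambda>x. fst v x + d), snd v)"

definition undelay :: "('x, 'p) valuation \<Rightarrow> real \<Rightarrow> ('x, 'p) valuation" where
  "undelay v d = ((\<lambda>x. fst v x - d), snd v)"

text \<open>Upper / lower temporal constraints (the lower ones include the implicit x >= 0).\<close>
definition U_Temp :: "('x, 'p) constr set \<Rightarrow> ('x, 'p) constr set" where
  "U_Temp Z = {c \<in> Z. \<exists>x k t. c = ClkC x k t \<and> k \<in> {Lt, Le, Eq}}"

definition L_Temp :: "('x, 'p) constr set \<Rightarrow> ('x, 'p) constr set" where
  "L_Temp Z = {c \<in> Z. \<exists>x k t. c = ClkC x k t \<and> k \<in> {Gt, Ge, Eq}}
              \<union> range (\<lambda>x. ClkC x Ge lt_zero)"

text \<open>Upper closure: upper constraints non-strict, lower constraints strict,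
  diagonal unchanged.  An equality is both upper and lower, so it yields
  its strict lower part and its non-strict upper part.\<close>
fun uc_constr :: "('x, 'p) constr \<Rightarrow> ('x, 'p) constr set" where
  "uc_constr (ClkC x Lt t) = {ClkC x Le t}"
| "uc_constr (ClkC x Le t) = {ClkC x Le t}"
| "uc_constr (ClkC x Eq t) = {ClkC x Gt t, ClkC x Le t}"
| "uc_constr (ClkC x Ge t) = {ClkC x Gt t}"
| "uc_constr (ClkC x Gt t) = {ClkC x Gt t}"
| "uc_constr c = {c}"

fun lc_constr :: "('x, 'p) constr \<Rightarrow> ('x, 'p) constr set" where
  "lc_constr (ClkC x Lt t) = {ClkC x Lt t}"
| "lc_constr (ClkC x Le t) = {ClkC x Lt t}"
| "lc_constr (ClkC x Eq t) = {ClkC x Ge t, ClkC x Lt t}"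
| "lc_constr (ClkC x Ge t) = {ClkC x Ge t}"
| "lc_constr (ClkC x Gt t) = {ClkC x Ge t}"
| "lc_constr c = {c}"

definition upper_closure :: "('x, 'p) constr set \<Rightarrow> ('x, 'p) constr set" where
  "upper_closure Z = (\<Union>c\<in>Z. uc_constr c) \<union> range (\<lambda>x. ClkC x Gt lt_zero)"

definition lower_closure :: "('x, 'p) constr set \<Rightarrow> ('x, 'p) constr set" where
  "lower_closure Z = (\<Union>c\<in>Z. lc_constr c) \<union> range (\<lambda>x. ClkC x Ge lt_zero)"

text \<open>Temporal upper / lower bounds (only meaningful for temporal constraints).\<close>
fun UB :: "('x, 'p) constr set \<Rightarrow> ('x, 'p) constr \<Rightarrow> ('x, 'p) constr set" where
  "UB Z (ClkC x k t) =
     ((if k = Lt then upper_closure Z else Z) - {ClkC x Le t}) \<union> {ClkC x Eq t}"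
| "UB Z _ = Z"

fun LB :: "('x, 'p) constr set \<Rightarrow> ('x, 'p) constr \<Rightarrow> ('x, 'p) constr set" where
  "LB Z (ClkC x k t) =
     ((if k = Gt then lower_closure Z else Z) - {ClkC x Ge t}) \<union> {ClkC x Eq t}"
| "LB Z _ = Z"

end

theory Submission imports Defs begin

abbreviation rv :: "('x, 'p::finite) valuation \<Rightarrow> 'p lterm \<Rightarrow> real" where
  "rv v t \<equiv> of_rat (lt_val (snd v) t)"

lemma delay_simps[simp]:
  "fst (delay v d) = (\<lambda>x. fst v x + d)" "snd (delay v d) = snd v"
  "fst (undelay v d) = (\<lambda>x. fst v x - d)" "snd (undelay v d) = snd v"
  by (simp_all add: delay_def undelay_def)

lemma lt_val_zero[simp]: "lt_val vp lt_zero = 0"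
  by (simp add: lt_val_def lt_zero_def)

lemma ev_lt: "0 < (a::real) \<Longrightarrow> eventually (\<lambda>e. e < a) (at_right 0)"
  unfolding eventually_at_right_field by (intro exI[of _ a]) auto

lemma ev_pos: "eventually (\<lambda>e::real. 0 < e) (at_right 0)"
  by (rule eventually_at_right_less)

lemma ev_get: "eventually P (at_right (0::real)) \<Longrightarrow> \<exists>b>0. \<forall>e. 0<e \<and> e<b \<longrightarrow> P e"
  unfolding eventually_at_right_field by auto

lemma zone_semI:
  assumes "\<And>x. fst v x \<ge> 0" "\<And>p. snd v p \<ge> 0" "\<And>c. c \<in> Z \<Longrightarrow> sat v c"
  shows "v \<in> zone_sem Z"
  using assms by (auto simp: zone_sem_def is_valuation_def)

lemma zone_semD:
  assumes "v \<in> zone_sem Z"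
  shows "fst v x \<ge> 0" "snd v p \<ge> 0" "c \<in> Z \<Longrightarrow> sat v c"
  using assms by (auto simp: zone_sem_def is_valuation_def)

lemma delay_mono:
  assumes "v \<in> zone_sem Z" "delay v d' \<in> zone_sem Z" "0 \<le> d" "d \<le> d'"
  shows "delay v d \<in> zone_sem Z"
proof (rule zone_semI)
  fix x show "fst (delay v d) x \<ge> 0" using zone_semD(1)[OF assms(1), of x] assms(3) by simp
next
  fix p show "snd (delay v d) p \<ge> 0" using zone_semD(2)[OF assms(1)] by simp
next
  fix c assume c: "c \<in> Z"
  have a: "sat v c" "sat (delay v d') c" using zone_semD(3)[OF assms(1) c] zone_semD(3)[OF assms(2) c] .
  show "sat (delay v d) c"
  proof (cases c)
    case (ClkC x k t) then show ?thesis using a assms(3,4) by (cases k) auto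
  qed (use a in auto)
qed

lemma undelay_mono:
  assumes "v \<in> zone_sem Z" "undelay v d' \<in> zone_sem Z" "0 \<le> d" "d \<le> d'"
  shows "undelay v d \<in> zone_sem Z"
proof (rule zone_semI)
  fix x show "fst (undelay v d) x \<ge> 0" using zone_semD(1)[OF assms(2), of x] assms(4) by simp
next
  fix p show "snd (undelay v d) p \<ge> 0" using zone_semD(2)[OF assms(1)] by simp
next
  fix c assume c: "c \<in> Z"
  have a: "sat v c" "sat (undelay v d') c" using zone_semD(3)[OF assms(1) c] zone_semD(3)[OF assms(2) c] .
  show "sat (undelay v d) c"
  proof (cases c)
    case (ClkC x k t) then show ?thesis using a assms(3,4) by (cases k) auto
  qed (use a in auto)
qed

lemma dense_lim:
  fixes a r s :: real
  assumes "\<And>d. 0 \<le> d \<Longrightarrow> d < s \<Longrightarrow> a + d \<le> r" "a \<le> r" "0 \<le> s"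
  shows "a + s \<le> r"
proof (rule ccontr)
  assume n: "\<not> a + s \<le> r"
  have "a + (r - a + s)/2 \<le> r" using assms n by (intro assms(1)) auto
  then show False using n by (simp add: field_simps)
qed

definition Sd :: "('x, 'p::finite) constr set \<Rightarrow> ('x, 'p) valuation \<Rightarrow> real set" where
  "Sd Z v = {\<delta>. \<delta> \<ge> 0 \<and> delay v \<delta> \<in> zone_sem Z}"

definition Su :: "('x, 'p::finite) constr set \<Rightarrow> ('x, 'p) valuation \<Rightarrow> real set" where
  "Su Z v = {\<delta>. \<delta> \<ge> 0 \<and> undelay v \<delta> \<in> zone_sem Z}"

lemma p1_sub:
  fixes Z :: "('x::finite, 'p::finite) constr set"
  assumes fin: "finite Z" and psi: "\<psi> \<in> U_Temp Z" and w: "w \<in> zone_sem (UB Z \<psi>)"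
  shows "\<exists>v. v \<in> zone_sem Z \<and> bdd_above (Sd Z v) \<and> w = delay v (Sup (Sd Z v))"
proof -
  obtain x k t where psi_eq: "\<psi> = ClkC x k t" and k: "k \<in> {Lt,Le,Eq}" and pZ: "\<psi> \<in> Z"
    using psi unfolding U_Temp_def by auto
  have wx: "fst w x = rv w t" using zone_semD(3)[OF w, of "ClkC x Eq t"] psi_eq by auto
  show ?thesis
  proof (cases "k = Lt")
    case False
    then have UB: "UB Z \<psi> = (Z - {ClkC x Le t}) \<union> {ClkC x Eq t}" using psi_eq by simp
    have wZ: "w \<in> zone_sem Z"
    proof (rule zone_semI)
      show "fst w y \<ge> 0" for y using zone_semD(1)[OF w] .
      show "snd w p \<ge> 0" for p using zone_semD(2)[OF w] .
      fix c assume cZ: "c \<in> Z"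
      show "sat w c"
      proof (cases "c = ClkC x Le t")
        case True then show ?thesis using wx by simp
      next
        case False then show ?thesis using zone_semD(3)[OF w, of c] UB cZ by auto
      qed
    qed
    have "Sd Z w = {0}"
    proof -
      { fix d assume "d \<in> Sd Z w"
        then have "d \<ge> 0" "sat (delay w d) \<psi>" using zone_semD(3)[of _ Z \<psi>] pZ unfolding Sd_def by auto
        then have "d = 0" using wx k psi_eq False by auto }
      moreover have "0 \<in> Sd Z w" using wZ unfolding Sd_def by (simp add: delay_def)
      ultimately show ?thesis by auto
    qed
    then show ?thesis using wZ by (intro exI[of _ w]) (simp add: delay_def)
  next
    case True
    then have UB: "UB Z \<psi> = (upper_closure Z - {ClkC x Le t}) \<union> {ClkC x Eq t}" using psi_eq by simp
    have inU: "c \<in> upper_closure Z \<Longrightarrow> c \<noteq> ClkC x Le t \<Longrightarrow> sat w c" for c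
      using zone_semD(3)[OF w, of c] UB by auto
    have le_all: "ClkC y Le s \<in> upper_closure Z \<Longrightarrow> fst w y \<le> rv w s" for y s
      using inU[of "ClkC y Le s"] wx by (cases "ClkC y Le s = ClkC x Le t") auto
    have pos: "fst w y > 0" for y using inU[of "ClkC y Gt lt_zero"] unfolding upper_closure_def by auto
    have ev: "eventually (\<lambda>e. undelay w e \<in> zone_sem Z) (at_right 0)"
    proof -
      have "eventually (\<lambda>e. \<forall>y. fst w y - e \<ge> 0) (at_right 0)"
        proof (rule eventually_all_finite[where P="\<lambda>e y. 0 \<le> fst w y - e"])
        fix y show "eventually (\<lambda>e. 0 \<le> fst w y - e) (at_right 0)"
          by (rule eventually_mono[OF ev_lt[OF pos[of y]]]) auto
      qed
      moreover have "eventually (\<lambda>e. \<forall>c\<in>Z. sat (undelay w e) c) (at_right 0)"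
      proof (rule eventually_ball_finite[OF fin], rule ballI)
        fix c assume cZ: "c \<in> Z"
        have ucU: "c' \<in> uc_constr c \<Longrightarrow> c' \<in> upper_closure Z" for c' using cZ unfolding upper_closure_def by auto
        show "eventually (\<lambda>e. sat (undelay w e) c) (at_right 0)"
        proof (cases c)
          case (ClkC y k' s)
          show ?thesis
          proof (cases k')
            case Lt
            then have "fst w y \<le> rv w s" using le_all[OF ucU] ClkC by auto
            then show ?thesis by (intro eventually_mono[OF ev_pos]) (auto simp: ClkC Lt)
          next
            case Le
            then have "fst w y \<le> rv w s" using le_all[OF ucU] ClkC by auto
            then show ?thesis by (intro eventually_mono[OF ev_pos]) (auto simp: ClkC Le)
          next
            case Eq
            then have "fst w y \<le> rv w s" "fst w y > rv w s" using le_all[OF ucU] inU[OF ucU, of "ClkC y Gt s"] ClkC by auto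
            then show ?thesis by simp
          next
            case Ge
            then have "fst w y > rv w s" using inU[OF ucU, of "ClkC y Gt s"] ClkC by auto
            then show ?thesis by (intro eventually_mono[OF ev_lt[of "fst w y - rv w s"]]) (auto simp: ClkC Ge)
          next
            case Gt
            then have "fst w y > rv w s" using inU[OF ucU, of "ClkC y Gt s"] ClkC by auto
            then show ?thesis by (intro eventually_mono[OF ev_lt[of "fst w y - rv w s"]]) (auto simp: ClkC Gt)
          qed
        next
          case (DiffC y z k' s)
          then have "sat w c" using inU[OF ucU, of c] by auto
          then show ?thesis by (intro always_eventually) (auto simp: DiffC)
        next
          case (ParC s' k' s)
          then have "sat w c" using inU[OF ucU, of c] by auto
          then show ?thesis by (intro always_eventually) (auto simp: ParC)
        qed
      qed
      ultimately show ?thesis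
        by eventually_elim (auto intro!: zone_semI simp: zone_semD(2)[OF w])
    qed
    obtain b where b: "b > 0" "\<And>e. 0 < e \<Longrightarrow> e < b \<Longrightarrow> undelay w e \<in> zone_sem Z"
      using ev_get[OF ev] by auto
    define \<epsilon> where "\<epsilon> = b / 2"
    have ep: "\<epsilon> > 0" "\<epsilon> < b" using b(1) by (auto simp: \<epsilon>_def)
    define v where "v = undelay w \<epsilon>"
    have dv: "delay v d = undelay w (\<epsilon> - d)" for d
      by (simp add: v_def delay_def undelay_def algebra_simps)
    have vZ: "v \<in> zone_sem Z" using b(2) ep by (simp add: v_def)
    have S: "Sd Z v = {0..<\<epsilon>}"
    proof (intro set_eqI iffI)
      fix d assume "d \<in> Sd Z v"
      then have "d \<ge> 0" "sat (delay v d) \<psi>" using zone_semD(3)[of _ Z \<psi>] pZ unfolding Sd_def by auto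
      then show "d \<in> {0..<\<epsilon>}" using wx psi_eq True by (auto simp: dv)
    next
      fix d assume "d \<in> {0..<\<epsilon>}"
      then show "d \<in> Sd Z v" using b(2)[of "\<epsilon> - d"] ep by (auto simp: Sd_def dv)
    qed
    show ?thesis
      by (intro exI[of _ v]) (use vZ ep in \<open>auto simp: S dv undelay_def\<close>)
  qed
qed

lemma p1_sup:
  fixes Z :: "('x::finite, 'p::finite) constr set"
  assumes fin: "finite Z" and vZ: "v \<in> zone_sem Z" and bdd: "bdd_above (Sd Z v)"
  shows "\<exists>\<psi>\<in>U_Temp Z. delay v (Sup (Sd Z v)) \<in> zone_sem (UB Z \<psi>)"
proof -
  define s where "s = Sup (Sd Z v)"
  have S0: "0 \<in> Sd Z v" using vZ by (simp add: Sd_def delay_def)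
  have s0: "s \<ge> 0" using cSup_upper[OF S0 bdd] s_def by simp
  have vc: "c \<in> Z \<Longrightarrow> sat v c" for c using zone_semD(3)[OF vZ] .
  have F1: "delay v d \<in> zone_sem Z" if d0: "0 \<le> d" and ds: "d < s" for d
  proof -
    obtain d' where "d' \<in> Sd Z v" "d < d'" using less_cSupD[of "Sd Z v" d] S0 ds s_def by auto
    then show ?thesis using delay_mono[OF vZ, of d' d] d0 unfolding Sd_def by auto
  qed
  have F2: "fst v y + s \<le> rv v t" if "ClkC y k t \<in> Z" "k \<in> {Lt, Le}" for y k t
  proof (rule dense_lim)
    show "fst v y \<le> rv v t" using vc[OF that(1)] that(2) by auto
    show "0 \<le> s" by (rule s0)
    fix d assume d0: "0 \<le> d" and ds: "d < s"
    show "fst v y + d \<le> rv v t" using zone_semD(3)[OF F1[OF d0 ds] that(1)] that(2) by auto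
  qed
  have F4: "s = 0" if "ClkC y Eq t \<in> Z" for y t
  proof (rule ccontr)
    assume "s \<noteq> 0"
    then have h: "0 \<le> s/2" "s/2 < s" using s0 by auto
    then show False using zone_semD(3)[OF F1[OF h] that] vc[OF that] \<open>s \<noteq> 0\<close> by auto
  qed
  have F3: "\<exists>y k t. ClkC y k t \<in> Z \<and> k \<in> {Lt,Le,Eq} \<and> fst v y + s = rv v t"
  proof (rule ccontr)
    assume nt: "\<not> ?thesis"
    have "eventually (\<lambda>e. \<forall>c\<in>Z. sat (delay v (s+e)) c) (at_right 0)"
    proof (rule eventually_ball_finite[OF fin], rule ballI)
      fix c assume cZ: "c \<in> Z"
      show "eventually (\<lambda>e. sat (delay v (s+e)) c) (at_right 0)"
      proof (cases c)
        case (ClkC y k t)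
        have ck: "ClkC y k t \<in> Z" using cZ ClkC by simp
        show ?thesis
        proof (cases k)
          case Lt
          have "fst v y + s \<noteq> rv v t" using ck nt Lt by blast
          moreover have "fst v y + s \<le> rv v t" using F2[OF ck] Lt by auto
          ultimately have "fst v y + s \<le> rv v t" "fst v y + s \<noteq> rv v t" by auto
          then have "fst v y + s < rv v t" by simp
          then show ?thesis by (intro eventually_mono[OF ev_lt[of "rv v t - (fst v y + s)"]]) (auto simp: ClkC Lt)
        next
          case Le
          have "fst v y + s \<noteq> rv v t" using ck nt Le by blast
          moreover have "fst v y + s \<le> rv v t" using F2[OF ck] Le by auto
          ultimately have "fst v y + s \<le> rv v t" "fst v y + s \<noteq> rv v t" by auto
          then have "fst v y + s < rv v t" by simp
          then show ?thesis by (intro eventually_mono[OF ev_lt[of "rv v t - (fst v y + s)"]]) (auto simp: ClkC Le)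
        next
          case Eq
          have "fst v y + s \<noteq> rv v t" using ck nt Eq by blast
          then have False using F4[of y t] vc[OF ck] ck Eq by auto
          then show ?thesis by simp
        next
          case Ge
          then show ?thesis using vc[OF cZ] s0 by (intro eventually_mono[OF ev_pos]) (auto simp: ClkC Ge)
        next
          case Gt
          then show ?thesis using vc[OF cZ] s0 by (intro eventually_mono[OF ev_pos]) (auto simp: ClkC Gt)
        qed
      qed (use vc[OF cZ] in auto)
    qed
    then have "eventually (\<lambda>e. delay v (s+e) \<in> zone_sem Z) (at_right 0)"
    proof (rule eventually_mono[OF eventually_conj[OF ev_pos]])
      fix e assume "0 < e \<and> (\<forall>c\<in>Z. sat (delay v (s + e)) c)"
      then show "delay v (s+e) \<in> zone_sem Z"
        using zone_semD(1,2)[OF vZ] s0 by (intro zone_semI) (auto intro: add_nonneg_nonneg)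
    qed
    then obtain b where "b > 0" "\<And>e. 0 < e \<Longrightarrow> e < b \<Longrightarrow> delay v (s+e) \<in> zone_sem Z"
      using ev_get by blast
    then have "s + b/2 \<in> Sd Z v" using s0 by (auto simp: Sd_def)
    then have "s + b/2 \<le> s" using cSup_upper[OF _ bdd, of "s + b/2"] unfolding s_def by blast
    then show False using \<open>b > 0\<close> by simp
  qed
  show ?thesis
  proof (cases "\<exists>y t. ClkC y Lt t \<in> Z \<and> fst v y + s = rv v t")
    case True
    then obtain y t where yt: "ClkC y Lt t \<in> Z" "fst v y + s = rv v t" by auto
    have sp: "s > 0" using vc[OF yt(1)] yt(2) by auto
    have UB: "UB Z (ClkC y Lt t) = (upper_closure Z - {ClkC y Le t}) \<union> {ClkC y Eq t}" by simp
    have "delay v s \<in> zone_sem (UB Z (ClkC y Lt t))"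
    proof (rule zone_semI)
      show "fst (delay v s) z \<ge> 0" for z using zone_semD(1)[OF vZ, of z] s0 by simp
      show "snd (delay v s) p \<ge> 0" for p using zone_semD(2)[OF vZ, of p] by simp
      fix c assume "c \<in> UB Z (ClkC y Lt t)"
      then consider "c = ClkC y Eq t" | z where "c = ClkC z Gt lt_zero"
        | c'' where "c'' \<in> Z" "c \<in> uc_constr c''"
        unfolding UB upper_closure_def by blast
      then show "sat (delay v s) c"
      proof cases
        case 1 then show ?thesis using yt by simp
      next
        case (2 z) then show ?thesis using zone_semD(1)[OF vZ, of z] sp by simp
      next
        case (3 c'')
        show ?thesis
        proof (cases c'')
          case (ClkC z k t'')
          show ?thesis
          proof (cases k)
            case Lt then show ?thesis using 3 F2[of z k t''] ClkC by auto
          next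
            case Le then show ?thesis using 3 F2[of z k t''] ClkC by auto
          next
            case Eq then show ?thesis using 3 F4[of z t''] ClkC sp by auto
          next
            case Ge then show ?thesis using 3 vc[of c''] ClkC sp by auto
          next
            case Gt then show ?thesis using 3 vc[of c''] ClkC sp by auto
          qed
        qed (use 3 vc[of c''] in auto)
      qed
    qed
    moreover have "ClkC y Lt t \<in> U_Temp Z" using yt(1) by (auto simp: U_Temp_def)
    ultimately show ?thesis unfolding s_def by blast
  next
    case False
    then obtain y k t where ykt: "ClkC y k t \<in> Z" "k \<in> {Le,Eq}" "fst v y + s = rv v t"
      using F3 by blast
    have wZ: "delay v s \<in> zone_sem Z"
    proof (rule zone_semI)
      show "fst (delay v s) z \<ge> 0" for z using zone_semD(1)[OF vZ, of z] s0 by simp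
      show "snd (delay v s) p \<ge> 0" for p using zone_semD(2)[OF vZ, of p] by simp
      fix c assume cZ: "c \<in> Z"
      show "sat (delay v s) c"
      proof (cases c)
        case (ClkC z k t'')
        show ?thesis
        proof (cases k)
          case Lt
          have ck: "ClkC z Lt t'' \<in> Z" using cZ ClkC Lt by simp
          have "fst v z + s \<noteq> rv v t''" using ck False by blast
          moreover have "fst v z + s \<le> rv v t''" using F2[OF ck] by auto
          ultimately show ?thesis using ClkC Lt by auto
        next
          case Le then show ?thesis using cZ F2[of z k t''] ClkC by auto
        next
          case Eq then show ?thesis using cZ F4[of z t''] vc[of c] ClkC by auto
        next
          case Ge then show ?thesis using cZ vc[of c] ClkC s0 by auto
        next
          case Gt then show ?thesis using cZ vc[of c] ClkC s0 by auto
        qed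
      qed (use cZ vc[of c] in auto)
    qed
    have UB: "UB Z (ClkC y k t) = (Z - {ClkC y Le t}) \<union> {ClkC y Eq t}" using ykt(2) by auto
    have "delay v s \<in> zone_sem (UB Z (ClkC y k t))"
      using wZ ykt(3) unfolding UB zone_sem_def by auto
    moreover have "ClkC y k t \<in> U_Temp Z" using ykt(1,2) by (auto simp: U_Temp_def)
    ultimately show ?thesis unfolding s_def by blast
  qed
qed

lemma p2_sub:
  fixes Z :: "('x::finite, 'p::finite) constr set"
  assumes fin: "finite Z" and psi: "\<psi> \<in> L_Temp Z" and w: "w \<in> zone_sem (LB Z \<psi>)"
  shows "\<exists>v. v \<in> zone_sem Z \<and> bdd_above (Su Z v) \<and> w = undelay v (Sup (Su Z v))"
proof -
  obtain x k t where psi_eq: "\<psi> = ClkC x k t" and k: "k \<in> {Gt,Ge,Eq}"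
    and pZ: "\<psi> \<in> Z \<or> (k = Ge \<and> t = lt_zero)"
    using psi unfolding L_Temp_def by blast
  have key: "sat u \<psi>" if uZ: "u \<in> zone_sem Z" for u
  proof (cases "\<psi> \<in> Z")
    case True then show ?thesis using zone_semD(3)[OF uZ] by blast
  next
    case False then show ?thesis using pZ zone_semD(1)[OF uZ] psi_eq by auto
  qed
  have wx: "fst w x = rv w t" using zone_semD(3)[OF w, of "ClkC x Eq t"] psi_eq by auto
  show ?thesis
  proof (cases "k = Gt")
    case False
    then have LB: "LB Z \<psi> = (Z - {ClkC x Ge t}) \<union> {ClkC x Eq t}" using psi_eq by simp
    have wZ: "w \<in> zone_sem Z"
    proof (rule zone_semI)
      show "fst w y \<ge> 0" for y using zone_semD(1)[OF w] .
      show "snd w p \<ge> 0" for p using zone_semD(2)[OF w] .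
      fix c assume cZ: "c \<in> Z"
      show "sat w c"
      proof (cases "c = ClkC x Ge t")
        case True then show ?thesis using wx by simp
      next
        case False then show ?thesis using zone_semD(3)[OF w, of c] LB cZ by auto
      qed
    qed
    have "Su Z w = {0}"
    proof -
      { fix d assume "d \<in> Su Z w"
        then have "d \<ge> 0" "sat (undelay w d) \<psi>" using key unfolding Su_def by auto
        then have "d = 0" using wx k psi_eq False by auto }
      moreover have "0 \<in> Su Z w" using wZ unfolding Su_def by (simp add: undelay_def)
      ultimately show ?thesis by auto
    qed
    then show ?thesis using wZ by (intro exI[of _ w]) (simp add: undelay_def)
  next
    case True
    then have LB: "LB Z \<psi> = (lower_closure Z - {ClkC x Ge t}) \<union> {ClkC x Eq t}" using psi_eq by simp
    have inL: "c \<in> lower_closure Z \<Longrightarrow> c \<noteq> ClkC x Ge t \<Longrightarrow> sat w c" for c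
      using zone_semD(3)[OF w, of c] LB by auto
    have ge_all: "ClkC y Ge s \<in> lower_closure Z \<Longrightarrow> fst w y \<ge> rv w s" for y s
      using inL[of "ClkC y Ge s"] wx by (cases "ClkC y Ge s = ClkC x Ge t") auto
    have ev: "eventually (\<lambda>e. delay w e \<in> zone_sem Z) (at_right 0)"
    proof -
      have "eventually (\<lambda>e. \<forall>c\<in>Z. sat (delay w e) c) (at_right 0)"
      proof (rule eventually_ball_finite[OF fin], rule ballI)
        fix c assume cZ: "c \<in> Z"
        have lcL: "c' \<in> lc_constr c \<Longrightarrow> c' \<in> lower_closure Z" for c' using cZ unfolding lower_closure_def by auto
        show "eventually (\<lambda>e. sat (delay w e) c) (at_right 0)"
        proof (cases c)
          case (ClkC y k' s)
          show ?thesis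
          proof (cases k')
            case Lt
            then have "fst w y < rv w s" using inL[OF lcL, of "ClkC y Lt s"] ClkC by auto
            then show ?thesis by (intro eventually_mono[OF ev_lt[of "rv w s - fst w y"]]) (auto simp: ClkC Lt)
          next
            case Le
            then have "fst w y < rv w s" using inL[OF lcL, of "ClkC y Lt s"] ClkC by auto
            then show ?thesis by (intro eventually_mono[OF ev_lt[of "rv w s - fst w y"]]) (auto simp: ClkC Le)
          next
            case Eq
            then have "fst w y \<ge> rv w s" "fst w y < rv w s" using ge_all[OF lcL] inL[OF lcL, of "ClkC y Lt s"] ClkC by auto
            then show ?thesis by simp
          next
            case Ge
            then have "fst w y \<ge> rv w s" using ge_all[OF lcL] ClkC by auto
            then show ?thesis by (intro eventually_mono[OF ev_pos]) (auto simp: ClkC Ge)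
          next
            case Gt
            then have "fst w y \<ge> rv w s" using ge_all[OF lcL] ClkC by auto
            then show ?thesis by (intro eventually_mono[OF ev_pos]) (auto simp: ClkC Gt)
          qed
        next
          case (DiffC y z k' s)
          then have "sat w c" using inL[OF lcL, of c] by auto
          then show ?thesis by (intro always_eventually) (auto simp: DiffC)
        next
          case (ParC s' k' s)
          then have "sat w c" using inL[OF lcL, of c] by auto
          then show ?thesis by (intro always_eventually) (auto simp: ParC)
        qed
      qed
      then show ?thesis
      proof (rule eventually_mono[OF eventually_conj[OF ev_pos]])
        fix e assume "0 < e \<and> (\<forall>c\<in>Z. sat (delay w e) c)"
        then show "delay w e \<in> zone_sem Z"
          using zone_semD(1,2)[OF w] by (intro zone_semI) (auto intro: add_nonneg_nonneg)
      qed
    qed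
    obtain b where b: "b > 0" "\<And>e. 0 < e \<Longrightarrow> e < b \<Longrightarrow> delay w e \<in> zone_sem Z"
      using ev_get[OF ev] by auto
    define \<epsilon> where "\<epsilon> = b / 2"
    have ep: "\<epsilon> > 0" "\<epsilon> < b" using b(1) by (auto simp: \<epsilon>_def)
    define v where "v = delay w \<epsilon>"
    have dv: "undelay v d = delay w (\<epsilon> - d)" for d
      by (simp add: v_def delay_def undelay_def algebra_simps)
    have vZ: "v \<in> zone_sem Z" using b(2) ep by (simp add: v_def)
    have S: "Su Z v = {0..<\<epsilon>}"
    proof (intro set_eqI iffI)
      fix d assume "d \<in> Su Z v"
      then have "d \<ge> 0" "sat (undelay v d) \<psi>" using key unfolding Su_def by auto
      then show "d \<in> {0..<\<epsilon>}" using wx psi_eq True by (auto simp: dv)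
    next
      fix d assume "d \<in> {0..<\<epsilon>}"
      then show "d \<in> Su Z v" using b(2)[of "\<epsilon> - d"] ep by (auto simp: Su_def dv)
    qed
    show ?thesis
      by (intro exI[of _ v]) (use vZ ep in \<open>auto simp: S dv delay_def\<close>)
  qed
qed

lemma p2_sup:
  fixes Z :: "('x::finite, 'p::finite) constr set"
  assumes fin: "finite Z" and vZ: "v \<in> zone_sem Z" and bdd: "bdd_above (Su Z v)"
  shows "\<exists>\<psi>\<in>L_Temp Z. undelay v (Sup (Su Z v)) \<in> zone_sem (LB Z \<psi>)"
proof -
  define s where "s = Sup (Su Z v)"
  have S0: "0 \<in> Su Z v" using vZ by (simp add: Su_def undelay_def)
  have s0: "s \<ge> 0" using cSup_upper[OF S0 bdd] s_def by simp
  have vc: "c \<in> Z \<Longrightarrow> sat v c" for c using zone_semD(3)[OF vZ] .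
  have F1: "undelay v d \<in> zone_sem Z" if d0: "0 \<le> d" and ds: "d < s" for d
  proof -
    obtain d' where "d' \<in> Su Z v" "d < d'" using less_cSupD[of "Su Z v" d] S0 ds s_def by auto
    then show ?thesis using undelay_mono[OF vZ, of d' d] d0 unfolding Su_def by auto
  qed
  have F2: "fst v y - s \<ge> rv v t" if "ClkC y k t \<in> Z" "k \<in> {Gt, Ge}" for y k t
  proof -
    have "(rv v t - fst v y) + s \<le> 0"
    proof (rule dense_lim)
      show "rv v t - fst v y \<le> 0" using vc[OF that(1)] that(2) by auto
      show "0 \<le> s" by (rule s0)
      fix d assume d0: "0 \<le> d" and ds: "d < s"
      show "rv v t - fst v y + d \<le> 0" using zone_semD(3)[OF F1[OF d0 ds] that(1)] that(2) by auto
    qed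
    then show ?thesis by simp
  qed
  have F2c: "fst v y - s \<ge> 0" for y
  proof -
    have "(- fst v y) + s \<le> 0"
    proof (rule dense_lim)
      show "- fst v y \<le> 0" using zone_semD(1)[OF vZ, of y] by auto
      show "0 \<le> s" by (rule s0)
      fix d assume d0: "0 \<le> d" and ds: "d < s"
      show "- fst v y + d \<le> 0" using zone_semD(1)[OF F1[OF d0 ds], of y] by auto
    qed
    then show ?thesis by simp
  qed
  have F4: "s = 0" if "ClkC y Eq t \<in> Z" for y t
  proof (rule ccontr)
    assume "s \<noteq> 0"
    then have h: "0 \<le> s/2" "s/2 < s" using s0 by auto
    then show False using zone_semD(3)[OF F1[OF h] that] vc[OF that] \<open>s \<noteq> 0\<close> by auto
  qed
  have F3: "(\<exists>y k t. ClkC y k t \<in> Z \<and> k \<in> {Gt,Ge,Eq} \<and> fst v y - s = rv v t) \<or> (\<exists>y. fst v y - s = 0)"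
  proof (rule ccontr)
    assume nt: "\<not> ?thesis"
    have "eventually (\<lambda>e. \<forall>c\<in>Z. sat (undelay v (s+e)) c) (at_right 0)"
    proof (rule eventually_ball_finite[OF fin], rule ballI)
      fix c assume cZ: "c \<in> Z"
      show "eventually (\<lambda>e. sat (undelay v (s+e)) c) (at_right 0)"
      proof (cases c)
        case (ClkC y k t)
        have ck: "ClkC y k t \<in> Z" using cZ ClkC by simp
        show ?thesis
        proof (cases k)
          case Gt
          have "fst v y - s \<noteq> rv v t" using ck nt Gt by blast
          moreover have "fst v y - s \<ge> rv v t" using F2[OF ck] Gt by auto
          ultimately have "fst v y - s > rv v t" by simp
          then show ?thesis by (intro eventually_mono[OF ev_lt[of "fst v y - s - rv v t"]]) (auto simp: ClkC Gt)
        next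
          case Ge
          have "fst v y - s \<noteq> rv v t" using ck nt Ge by blast
          moreover have "fst v y - s \<ge> rv v t" using F2[OF ck] Ge by auto
          ultimately have "fst v y - s > rv v t" by simp
          then show ?thesis by (intro eventually_mono[OF ev_lt[of "fst v y - s - rv v t"]]) (auto simp: ClkC Ge)
        next
          case Eq
          have "fst v y - s \<noteq> rv v t" using ck nt Eq by blast
          then have False using F4[of y t] vc[OF ck] ck Eq by auto
          then show ?thesis by simp
        next
          case Le
          then show ?thesis using vc[OF cZ] s0 by (intro eventually_mono[OF ev_pos]) (auto simp: ClkC Le)
        next
          case Lt
          then show ?thesis using vc[OF cZ] s0 by (intro eventually_mono[OF ev_pos]) (auto simp: ClkC Lt)
        qed
      qed (use vc[OF cZ] in auto)
    qed
    moreover have "eventually (\<lambda>e. \<forall>y. 0 \<le> fst v y - (s + e)) (at_right 0)"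
    proof (rule eventually_all_finite[where P="\<lambda>e y. 0 \<le> fst v y - (s + e)"])
      fix y
      have "fst v y - s > 0" using F2c[of y] nt by force
      then show "eventually (\<lambda>e. 0 \<le> fst v y - (s + e)) (at_right 0)"
        by (intro eventually_mono[OF ev_lt[of "fst v y - s"]]) auto
    qed
    ultimately have "eventually (\<lambda>e. undelay v (s+e) \<in> zone_sem Z) (at_right 0)"
      by eventually_elim (auto intro!: zone_semI simp: zone_semD(2)[OF vZ])
    then obtain b where "b > 0" "\<And>e. 0 < e \<Longrightarrow> e < b \<Longrightarrow> undelay v (s+e) \<in> zone_sem Z"
      using ev_get by blast
    then have "s + b/2 \<in> Su Z v" using s0 by (auto simp: Su_def)
    then have "s + b/2 \<le> s" using cSup_upper[OF _ bdd, of "s + b/2"] unfolding s_def by blast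
    then show False using \<open>b > 0\<close> by simp
  qed
  show ?thesis
  proof (cases "\<exists>y t. ClkC y Gt t \<in> Z \<and> fst v y - s = rv v t")
    case True
    then obtain y t where yt: "ClkC y Gt t \<in> Z" "fst v y - s = rv v t" by auto
    have sp: "s > 0" using vc[OF yt(1)] yt(2) by auto
    have LB: "LB Z (ClkC y Gt t) = (lower_closure Z - {ClkC y Ge t}) \<union> {ClkC y Eq t}" by simp
    have "undelay v s \<in> zone_sem (LB Z (ClkC y Gt t))"
    proof (rule zone_semI)
      show "fst (undelay v s) z \<ge> 0" for z using F2c[of z] by simp
      show "snd (undelay v s) p \<ge> 0" for p using zone_semD(2)[OF vZ, of p] by simp
      fix c assume "c \<in> LB Z (ClkC y Gt t)"
      then consider "c = ClkC y Eq t" | z where "c = ClkC z Ge lt_zero"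
        | c'' where "c'' \<in> Z" "c \<in> lc_constr c''"
        unfolding LB lower_closure_def by blast
      then show "sat (undelay v s) c"
      proof cases
        case 1 then show ?thesis using yt by simp
      next
        case (2 z) then show ?thesis using F2c[of z] by simp
      next
        case (3 c'')
        show ?thesis
        proof (cases c'')
          case (ClkC z k t'')
          show ?thesis
          proof (cases k)
            case Gt then show ?thesis using 3 F2[of z k t''] ClkC by auto
          next
            case Ge then show ?thesis using 3 F2[of z k t''] ClkC by auto
          next
            case Eq then show ?thesis using 3 F4[of z t''] ClkC sp by auto
          next
            case Le then show ?thesis using 3 vc[of c''] ClkC sp by auto
          next
            case Lt then show ?thesis using 3 vc[of c''] ClkC sp by auto
          qed
        qed (use 3 vc[of c''] in auto)
      qed
    qed
    moreover have "ClkC y Gt t \<in> L_Temp Z" using yt(1) by (auto simp: L_Temp_def)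
    ultimately show ?thesis unfolding s_def by blast
  next
    case False
    obtain y k t where ykt: "ClkC y k t \<in> L_Temp Z" "k \<in> {Ge,Eq}" "fst v y - s = rv v t"
    proof -
      consider (a) y k t where "ClkC y k t \<in> Z" "k \<in> {Gt,Ge,Eq}" "fst v y - s = rv v t"
        | (b) y where "fst v y - s = 0" using F3 by blast
      then show thesis
      proof cases
        case (a y k t)
        then have "k \<noteq> Gt" using False by blast
        then show thesis using that[of y k t] a by (auto simp: L_Temp_def)
      next
        case (b y)
        then show thesis using that[of y Ge lt_zero] by (auto simp: L_Temp_def)
      qed
    qed
    have wZ: "undelay v s \<in> zone_sem Z"
    proof (rule zone_semI)
      show "fst (undelay v s) z \<ge> 0" for z using F2c[of z] by simp
      show "snd (undelay v s) p \<ge> 0" for p using zone_semD(2)[OF vZ, of p] by simp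
      fix c assume cZ: "c \<in> Z"
      show "sat (undelay v s) c"
      proof (cases c)
        case (ClkC z k t'')
        show ?thesis
        proof (cases k)
          case Gt
          have ck: "ClkC z Gt t'' \<in> Z" using cZ ClkC Gt by simp
          have "fst v z - s \<noteq> rv v t''" using ck False by blast
          moreover have "fst v z - s \<ge> rv v t''" using F2[OF ck] by auto
          ultimately show ?thesis using ClkC Gt by auto
        next
          case Ge then show ?thesis using cZ F2[of z k t''] ClkC by auto
        next
          case Eq then show ?thesis using cZ F4[of z t''] vc[of c] ClkC by auto
        next
          case Le then show ?thesis using cZ vc[of c] ClkC s0 by auto
        next
          case Lt then show ?thesis using cZ vc[of c] ClkC s0 by auto
        qed
      qed (use cZ vc[of c] in auto)
    qed
    have LB: "LB Z (ClkC y k t) = (Z - {ClkC y Ge t}) \<union> {ClkC y Eq t}" using ykt(2) by auto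
    have "undelay v s \<in> zone_sem (LB Z (ClkC y k t))"
      using wZ ykt(3) unfolding LB zone_sem_def by auto
    with ykt(1) show ?thesis unfolding s_def by blast
  qed
qed

theorem theorem2:
  fixes Z :: "('x::finite, 'p::finite) constr set"
  assumes "finite Z"
  shows "((\<Union>\<psi>\<in>U_Temp Z. zone_sem (UB Z \<psi>)) =
           {delay v d | v d. v \<in> zone_sem Z
              \<and> bdd_above {\<delta>. \<delta> \<ge> 0 \<and> delay v \<delta> \<in> zone_sem Z}
              \<and> d = Sup {\<delta>. \<delta> \<ge> 0 \<and> delay v \<delta> \<in> zone_sem Z}}) \<and>
         ((\<Union>\<psi>\<in>L_Temp Z. zone_sem (LB Z \<psi>)) =
           {undelay v d | v d. v \<in> zone_sem Z
              \<and> bdd_above {\<delta>. \<delta> \<ge> 0 \<and> undelay v \<delta> \<in> zone_sem Z}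
              \<and> d = Sup {\<delta>. \<delta> \<ge> 0 \<and> undelay v \<delta> \<in> zone_sem Z}})"
  unfolding Sd_def[symmetric] Su_def[symmetric]
proof (intro conjI set_eqI iffI)
  fix w assume "w \<in> (\<Union>\<psi>\<in>U_Temp Z. zone_sem (UB Z \<psi>))"
  then obtain \<psi> where "\<psi> \<in> U_Temp Z" "w \<in> zone_sem (UB Z \<psi>)" by blast
  from p1_sub[OF assms this] show "w \<in> {delay v d |v d. v \<in> zone_sem Z \<and> bdd_above (Sd Z v) \<and> d = Sup (Sd Z v)}"
    by blast
next
  fix w assume "w \<in> {delay v d |v d. v \<in> zone_sem Z \<and> bdd_above (Sd Z v) \<and> d = Sup (Sd Z v)}"
  then obtain v where "v \<in> zone_sem Z" "bdd_above (Sd Z v)" "w = delay v (Sup (Sd Z v))" by blast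
  with p1_sup[OF assms] show "w \<in> (\<Union>\<psi>\<in>U_Temp Z. zone_sem (UB Z \<psi>))" by blast
next
  fix w assume "w \<in> (\<Union>\<psi>\<in>L_Temp Z. zone_sem (LB Z \<psi>))"
  then obtain \<psi> where "\<psi> \<in> L_Temp Z" "w \<in> zone_sem (LB Z \<psi>)" by blast
  from p2_sub[OF assms this] show "w \<in> {undelay v d |v d. v \<in> zone_sem Z \<and> bdd_above (Su Z v) \<and> d = Sup (Su Z v)}"
    by blast
next
  fix w assume "w \<in> {undelay v d |v d. v \<in> zone_sem Z \<and> bdd_above (Su Z v) \<and> d = Sup (Su Z v)}"
  then obtain v where "v \<in> zone_sem Z" "bdd_above (Su Z v)" "w = undelay v (Sup (Su Z v))" by blast
  with p2_sup[OF assms] show "w \<in> (\<Union>\<psi>\<in>L_Temp Z. zone_sem (LB Z \<psi>))" by blast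
qed

end
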